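(* Let $\Omega\subset\mathbb{R}^d$ be a bounded open set, $T>0$, $T_0\in(0,T)$, $r_0>0$, and $\mathfrak{B}\in L^\infty(0,T;W^{1,\infty}(\mathbb{R}^d)^d)$. Let $\mathcal{O}\subset\mathbb{R}^d$ be a nonempty open set with bounded boundary, and assume that $(T,T_0,r_0,\mathfrak{B},\Omega)$ satisfies the flushing condition for $\mathcal{O}$. Then there exists an open set $\mathcal{O}_0$ with $\overline{\mathcal{O}_0}$ compact and contained in $\mathcal{O}$ such that $(T,T_0,r_0/2,\mathfrak{B},\Omega)$ satisfies the flushing condition for $\mathcal{O}_0$.
   Context: $\Phi(t,t_0,x_0)$ denotes the solution of $\frac{d}{dt}\Phi(t,t_0,x_0)=\mathfrak{B}(\Phi(t,t_0,x_0),t)$, $\Phi(t_0,t_0,x_0)=x_0$, for $t,t_0\in[0,T]$. For a nonempty open $\mathcal{O}\subset\mathbb{R}^d$ and $r>0$, we say $(T,T_0,r,\mathfrak{B},\Omega)$ satisfies the flushing condition for $\mathcal{O}$ if: for all $x_0\in\overline{\Omega}$ and all $t_0\in[T_0,T]$ there exists $t\in(t_0-T_0,t_0)$ such that $\Phi(t,t_0,x)\in\mathcal{O}$ for all $x\in\overline{B}(x_0,r)$. *)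

theory Defs
  imports "HOL-Analysis.Analysis"
begin

text \<open>Standing hypothesis: B is (a representative of) an element of
  L-infinity in time with values in W^{1,infinity}(R^d)^d on [0,T]:
  measurable in t, uniformly bounded, uniformly Lipschitz in x.\<close>
definition Linf_W1inf :: "real \<Rightarrow> ('a::euclidean_space \<Rightarrow> real \<Rightarrow> 'a) \<Rightarrow> bool" where
  "Linf_W1inf T B \<longleftrightarrow>
     (\<forall>x. (\<lambda>t. B x t) measurable_on {0..T}) \<and>
     (\<exists>M. \<forall>x. \<forall>t\<in>{0..T}. norm (B x t) \<le> M) \<and>
     (\<exists>L. \<forall>t\<in>{0..T}. L-lipschitz_on UNIV (\<lambda>x. B x t))"

text \<open>Phi is the flow of B on [0,T]: Phi(t,t0,x0) solves
  d/dt Phi = B(Phi,t), Phi(t0,t0,x0) = x0 (Caratheodory/integral sense).\<close>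
definition is_flow :: "real \<Rightarrow> ('a::euclidean_space \<Rightarrow> real \<Rightarrow> 'a) \<Rightarrow> (real \<Rightarrow> real \<Rightarrow> 'a \<Rightarrow> 'a) \<Rightarrow> bool" where
  "is_flow T B \<Phi> \<longleftrightarrow>
     (\<forall>t0\<in>{0..T}. \<forall>x0. \<Phi> t0 t0 x0 = x0 \<and>
        (\<forall>t\<in>{0..T}.
           (t0 \<le> t \<longrightarrow> ((\<lambda>s. B (\<Phi> s t0 x0) s) has_integral (\<Phi> t t0 x0 - x0)) {t0..t}) \<and>
           (t \<le> t0 \<longrightarrow> ((\<lambda>s. B (\<Phi> s t0 x0) s) has_integral (x0 - \<Phi> t t0 x0)) {t..t0})))"

definition flushing :: "real \<Rightarrow> real \<Rightarrow> real \<Rightarrow> (real \<Rightarrow> real \<Rightarrow> 'a::euclidean_space \<Rightarrow> 'a) \<Rightarrow> 'a set \<Rightarrow> 'a set \<Rightarrow> bool" where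
  "flushing T T0 r \<Phi> \<Omega> U \<longleftrightarrow>
     (\<forall>x0\<in>closure \<Omega>. \<forall>t0\<in>{T0..T}. \<exists>t\<in>{t0 - T0<..<t0}. \<forall>x\<in>cball x0 r. \<Phi> t t0 x \<in> U)"

end

theory Submission
  imports Defs
begin

lemma gronwall_fwd:
  fixes u :: "real \<Rightarrow> real"
  assumes cont: "continuous_on {a..b} u" and L: "0 \<le> L"
    and le: "\<And>s. s \<in> {a..b} \<Longrightarrow> u s \<le> c + L * integral {a..s} u"
    and s: "s \<in> {a..b}"
  shows "u s \<le> c * exp (L*(s-a))"
proof -
  define I where "I x = integral {a..x} u" for x
  define w where "w x = exp (-L*(x-a)) * (c + L * I x)" for x
  have Ic: "continuous_on {a..b} I"
    unfolding I_def by (rule indefinite_integral_continuous_1[OF integrable_continuous_real[OF cont]])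
  have wc: "continuous_on {a..s} w"
    unfolding w_def using s by (intro continuous_intros continuous_on_subset[OF Ic]) auto
  have "w s \<le> w a"
  proof (rule DERIV_nonpos_imp_decreasing_open[of a s w])
    show "a \<le> s" using s by auto
    fix x assume x: "a < x" "x < s"
    have "(I has_real_derivative u x) (at x within {a..b})"
      unfolding I_def using x s by (intro integral_has_real_derivative[OF cont]) auto
    then have dI: "(I has_real_derivative u x) (at x)"
      using x s by (simp add: at_within_Icc_at)
    have "(w has_real_derivative (exp (-L*(x-a)) * (-L) * (c + L * I x) + exp (-L*(x-a)) * (L * u x))) (at x)"
      unfolding w_def by (auto intro!: derivative_eq_intros dI)
    moreover have "exp (-L*(x-a)) * (-L) * (c + L * I x) + exp (-L*(x-a)) * (L * u x) \<le> 0"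
    proof -
      have "u x \<le> c + L * I x" using le[of x] x s unfolding I_def by auto
      then have "L * u x \<le> L * (c + L * I x)" using L by (simp add: mult_left_mono)
      then have "exp (-L*(x-a)) * (L * u x - L * (c + L * I x)) \<le> 0"
        by (intro mult_nonneg_nonpos) auto
      then show ?thesis by (simp add: algebra_simps)
    qed
    ultimately show "\<exists>y. (w has_real_derivative y) (at x) \<and> y \<le> 0" by blast
  qed (use wc in auto)
  then have "w s \<le> c" by (simp add: w_def I_def)
  moreover have "u s \<le> exp (L*(s-a)) * w s"
    using le[OF s] by (simp add: w_def I_def exp_minus_inverse mult.assoc[symmetric] exp_add[symmetric])
  ultimately have "u s \<le> exp (L*(s-a)) * c"
    by (smt (verit) exp_gt_zero mult_left_mono)
  then show ?thesis by (simp add: mult.commute)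
qed

lemma sol_compare_fwd:
  fixes f g :: "real \<Rightarrow> 'a::euclidean_space" and B :: "'a \<Rightarrow> real \<Rightarrow> 'a"
  assumes lip: "\<And>s x y. s \<in> {a..b} \<Longrightarrow> norm (B x s - B y s) \<le> L * norm (x - y)" and L: "0 \<le> L"
    and hf: "\<And>s. s \<in> {a..b} \<Longrightarrow> ((\<lambda>\<tau>. B (f \<tau>) \<tau>) has_integral (f s - f a)) {a..s}"
    and hg: "\<And>s. s \<in> {a..b} \<Longrightarrow> ((\<lambda>\<tau>. B (g \<tau>) \<tau>) has_integral (g s - g a)) {a..s}"
    and s: "s \<in> {a..b}"
  shows "norm (f s - g s) \<le> norm (f a - g a) * exp (L*(s-a))"
proof -
  define F where "F \<tau> = B (f \<tau>) \<tau>" for \<tau>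
  define G where "G \<tau> = B (g \<tau>) \<tau>" for \<tau>
  have ab: "a \<le> b" using s by auto
  have Fi: "F integrable_on {a..b}" using hf[of b] ab unfolding F_def by auto
  have Gi: "G integrable_on {a..b}" using hg[of b] ab unfolding G_def by auto
  have fe: "f x = f a + integral {a..x} F" if "x \<in> {a..b}" for x
    using hf[OF that] unfolding F_def by (simp add: integral_unique)
  have ge: "g x = g a + integral {a..x} G" if "x \<in> {a..b}" for x
    using hg[OF that] unfolding G_def by (simp add: integral_unique)
  have fc: "continuous_on {a..b} f"
  proof (rule continuous_on_eq[OF _ fe[symmetric]])
    show "continuous_on {a..b} (\<lambda>x. f a + integral {a..x} F)"
      by (intro continuous_on_add continuous_on_const indefinite_integral_continuous_1[OF Fi])
  qed
  have gc: "continuous_on {a..b} g"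
  proof (rule continuous_on_eq[OF _ ge[symmetric]])
    show "continuous_on {a..b} (\<lambda>x. g a + integral {a..x} G)"
      by (intro continuous_on_add continuous_on_const indefinite_integral_continuous_1[OF Gi])
  qed
  define u where "u x = norm (f x - g x)" for x
  have uc: "continuous_on {a..b} u" unfolding u_def using fc gc by (intro continuous_intros)
  have "u x \<le> u a + L * integral {a..x} u" if x: "x \<in> {a..b}" for x
  proof -
    have sub: "{a..x} \<subseteq> {a..b}" using x by auto
    have "f x - g x = (f a - g a) + integral {a..x} (\<lambda>\<tau>. F \<tau> - G \<tau>)"
      using fe[OF x] ge[OF x] integrable_on_subinterval[OF Fi sub] integrable_on_subinterval[OF Gi sub]
      by (simp add: integral_diff)
    then have "u x \<le> u a + norm (integral {a..x} (\<lambda>\<tau>. F \<tau> - G \<tau>))"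
      unfolding u_def by (metis norm_triangle_ineq)
    also have "norm (integral {a..x} (\<lambda>\<tau>. F \<tau> - G \<tau>)) \<le> integral {a..x} (\<lambda>\<tau>. L * u \<tau>)"
    proof (rule integral_norm_bound_integral)
      show "(\<lambda>\<tau>. F \<tau> - G \<tau>) integrable_on {a..x}"
        using integrable_on_subinterval[OF Fi sub] integrable_on_subinterval[OF Gi sub] by (rule integrable_diff)
      show "(\<lambda>\<tau>. L * u \<tau>) integrable_on {a..x}"
        by (rule integrable_continuous_real) (intro continuous_intros continuous_on_subset[OF uc sub])
      fix \<tau> assume "\<tau> \<in> {a..x}"
      then show "norm (F \<tau> - G \<tau>) \<le> L * u \<tau>" unfolding F_def G_def u_def using lip[of \<tau>] x by auto
    qed
    finally show ?thesis by simp
  qed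
  from gronwall_fwd[OF uc L this s] show ?thesis by (simp add: u_def)
qed

lemma sol_compare_bwd:
  fixes f g :: "real \<Rightarrow> 'a::euclidean_space" and B :: "'a \<Rightarrow> real \<Rightarrow> 'a"
  assumes lip: "\<And>s x y. s \<in> {a..b} \<Longrightarrow> norm (B x s - B y s) \<le> L * norm (x - y)" and L: "0 \<le> L"
    and hf: "\<And>s. s \<in> {a..b} \<Longrightarrow> ((\<lambda>\<tau>. B (f \<tau>) \<tau>) has_integral (f b - f s)) {s..b}"
    and hg: "\<And>s. s \<in> {a..b} \<Longrightarrow> ((\<lambda>\<tau>. B (g \<tau>) \<tau>) has_integral (g b - g s)) {s..b}"
    and s: "s \<in> {a..b}"
  shows "norm (f s - g s) \<le> norm (f b - g b) * exp (L*(b-s))"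
proof -
  define B' where "B' x \<sigma> = - B x (-\<sigma>)" for x \<sigma>
  have *: "((\<lambda>\<tau>. B' (h (-\<tau>)) \<tau>) has_integral (h (-\<sigma>) - h (- (-b)))) {-b..\<sigma>}"
    if hh: "\<And>s. s \<in> {a..b} \<Longrightarrow> ((\<lambda>\<tau>. B (h \<tau>) \<tau>) has_integral (h b - h s)) {s..b}"
      and \<sigma>: "\<sigma> \<in> {-b..-a}" for h \<sigma>
  proof -
    have "((\<lambda>\<tau>. - B (h \<tau>) \<tau>) has_integral (h (-\<sigma>) - h b)) {-\<sigma>..b}"
      using has_integral_neg[OF hh[of "-\<sigma>"]] \<sigma> by auto
    then have "((\<lambda>\<tau>. - B (h (-\<tau>)) (-\<tau>)) has_integral (h (-\<sigma>) - h b)) {-b..- (-\<sigma>)}"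
      by (subst has_integral_reflect_real) 
    then show ?thesis by (simp add: B'_def)
  qed
  have "norm ((\<lambda>\<sigma>. f (-\<sigma>)) (-s) - (\<lambda>\<sigma>. g (-\<sigma>)) (-s)) \<le>
      norm ((\<lambda>\<sigma>. f (-\<sigma>)) (-b) - (\<lambda>\<sigma>. g (-\<sigma>)) (-b)) * exp (L*(-s - -b))"
  proof (rule sol_compare_fwd[where B=B' and a="-b" and b="-a"])
    show "norm (B' x \<sigma> - B' y \<sigma>) \<le> L * norm (x - y)" if "\<sigma> \<in> {-b..-a}" for \<sigma> x y
      using lip[of "-\<sigma>" x y] that by (auto simp: B'_def norm_minus_commute)
  qed (use L s *[OF hf] *[OF hg] in auto)
  then show ?thesis by simp
qed


lemma conv_bwd_fwd:
  fixes F :: "real \<Rightarrow> 'a::euclidean_space"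
  assumes h: "\<And>s. s \<in> {a..b} \<Longrightarrow> (F has_integral (f b - f s)) {s..b}"
    and s: "s \<in> {a..b}"
  shows "(F has_integral (f s - f a)) {a..s}"
proof -
  have ab: "a \<le> b" using s by auto
  have "F integrable_on {a..s}"
    using integrable_subinterval_real[OF has_integral_integrable[OF h[of a]]] s by auto
  then obtain i where i: "(F has_integral i) {a..s}" by blast
  have "(F has_integral (i + (f b - f s))) {a..b}"
    using has_integral_combine[OF _ _ i h[OF s]] s by auto
  moreover have "(F has_integral (f b - f a)) {a..b}" using h[of a] ab by auto
  ultimately have "i + (f b - f s) = f b - f a" by (rule has_integral_unique)
  then have "i = f s - f a" by (simp add: algebra_simps)
  then show ?thesis using i by simp
qed

lemma conv_fwd_bwd:
  fixes F :: "real \<Rightarrow> 'a::euclidean_space"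
  assumes h: "\<And>s. s \<in> {a..b} \<Longrightarrow> (F has_integral (f s - f a)) {a..s}"
    and s: "s \<in> {a..b}"
  shows "(F has_integral (f b - f s)) {s..b}"
proof -
  have ab: "a \<le> b" using s by auto
  have "F integrable_on {s..b}"
    using integrable_subinterval_real[OF has_integral_integrable[OF h[of b]]] s by auto
  then obtain i where i: "(F has_integral i) {s..b}" by blast
  have "(F has_integral ((f s - f a) + i)) {a..b}"
    using has_integral_combine[OF _ _ h[OF s] i] s by auto
  moreover have "(F has_integral (f b - f a)) {a..b}" using h[of b] ab by auto
  ultimately have "(f s - f a) + i = f b - f a" by (rule has_integral_unique)
  then have "i = f b - f s" by (simp add: algebra_simps)
  then show ?thesis using i by simp
qed

theorem proposition2p2:
  fixes \<Omega> U :: "'a::euclidean_space set"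
    and B :: "'a \<Rightarrow> real \<Rightarrow> 'a"
    and \<Phi> :: "real \<Rightarrow> real \<Rightarrow> 'a \<Rightarrow> 'a"
    and T T0 r0 :: real
  assumes "open \<Omega>" "bounded \<Omega>"
    and "T > 0" "0 < T0" "T0 < T" "r0 > 0"
    and "Linf_W1inf T B"
    and "is_flow T B \<Phi>"
    and "open U" "U \<noteq> {}" "bounded (frontier U)"
    and "flushing T T0 r0 \<Phi> \<Omega> U"
  shows "\<exists>O0. open O0 \<and> compact (closure O0) \<and> closure O0 \<subseteq> U \<and>
               flushing T T0 (r0/2) \<Phi> \<Omega> O0"
proof -
  note flow = assms(8)[unfolded is_flow_def]
  obtain M where M: "\<And>x t. t \<in> {0..T} \<Longrightarrow> norm (B x t) \<le> M"
    using assms(7) unfolding Linf_W1inf_def by blast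
  obtain L where L: "\<And>t. t \<in> {0..T} \<Longrightarrow> L-lipschitz_on UNIV (\<lambda>x. B x t)"
    using assms(7) unfolding Linf_W1inf_def by blast
  have L0: "0 \<le> L" using L[of 0] assms(3) by (auto simp: lipschitz_on_def)
  have lip: "norm (B x s - B y s) \<le> L * norm (x - y)" if "s \<in> {0..T}" for s x y
    using L[OF that] by (auto simp: lipschitz_on_def dist_norm)
  define K where "K = exp (L * T)"
  have K0: "K > 0" by (simp add: K_def)
  define \<delta> where "\<delta> = r0 / (2 * K)"
  have \<delta>0: "\<delta> > 0" using K0 assms(6) by (simp add: \<delta>_def)
  have \<delta>K: "\<delta> * K = r0 / 2" using K0 by (simp add: \<delta>_def)
  obtain Rb where Rb: "\<And>x. x \<in> closure \<Omega> \<Longrightarrow> norm x \<le> Rb"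
    using bounded_closure[OF assms(2)] unfolding bounded_iff by blast
  define R where "R = Rb + r0 + \<bar>M\<bar> * T"
  have fwd: "((\<lambda>\<tau>. B (\<Phi> \<tau> t0 x) \<tau>) has_integral (\<Phi> s t0 x - \<Phi> t0 t0 x)) {t0..s}"
    if "t0 \<in> {0..T}" "s \<in> {t0..T}" for t0 s x
    using flow that by auto
  have bwd: "((\<lambda>\<tau>. B (\<Phi> \<tau> t0 x) \<tau>) has_integral (\<Phi> t0 t0 x - \<Phi> s t0 x)) {s..t0}"
    if "t0 \<in> {0..T}" "s \<in> {0..t0}" for t0 s x
    using flow that by auto
  have id: "\<Phi> t0 t0 x = x" if "t0 \<in> {0..T}" for t0 x using flow that by auto
  have lipest: "norm (\<Phi> t0 t y - x) \<le> norm (y - \<Phi> t t0 x) * K"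
    if tt: "0 \<le> t" "t \<le> t0" "t0 \<le> T" for t t0 x y
  proof -
    have "norm ((\<lambda>s. \<Phi> s t y) t0 - (\<lambda>s. \<Phi> s t0 x) t0) \<le>
        norm ((\<lambda>s. \<Phi> s t y) t - (\<lambda>s. \<Phi> s t0 x) t) * exp (L*(t0-t))"
    proof (rule sol_compare_fwd[where B=B and a=t and b=t0])
      show "norm (B x s - B y s) \<le> L * norm (x - y)" if "s \<in> {t..t0}" for s x y
        using lip[of s x y] that tt by auto
      show "((\<lambda>\<tau>. B (\<Phi> \<tau> t y) \<tau>) has_integral (\<Phi> s t y - \<Phi> t t y)) {t..s}"
        if "s \<in> {t..t0}" for s using fwd[of t s y] that tt by auto
      show "((\<lambda>\<tau>. B (\<Phi> \<tau> t0 x) \<tau>) has_integral (\<Phi> s t0 x - \<Phi> t t0 x)) {t..s}"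
        if "s \<in> {t..t0}" for s
        by (rule conv_bwd_fwd[where b=t0 and f="\<lambda>s. \<Phi> s t0 x"]) (use bwd tt that in auto)
    qed (use L0 tt in auto)
    moreover have "exp (L*(t0-t)) \<le> K" unfolding K_def using L0 tt by (auto intro: mult_left_mono)
    ultimately show ?thesis using id[of t y] id[of t0 x] tt
      by (smt (verit) mult_left_mono norm_ge_zero atLeastAtMost_iff)
  qed
  have inv: "\<Phi> t t0 (\<Phi> t0 t y) = y" if tt: "0 \<le> t" "t \<le> t0" "t0 \<le> T" for t t0 y
  proof -
    define z where "z = \<Phi> t0 t y"
    have "norm ((\<lambda>s. \<Phi> s t y) t - (\<lambda>s. \<Phi> s t0 z) t) \<le>
        norm ((\<lambda>s. \<Phi> s t y) t0 - (\<lambda>s. \<Phi> s t0 z) t0) * exp (L*(t0-t))"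
    proof (rule sol_compare_bwd[where B=B and a=t and b=t0])
      show "norm (B x s - B y s) \<le> L * norm (x - y)" if "s \<in> {t..t0}" for s x y
        using lip[of s x y] that tt by auto
      show "((\<lambda>\<tau>. B (\<Phi> \<tau> t y) \<tau>) has_integral (\<Phi> t0 t y - \<Phi> s t y)) {s..t0}"
        if "s \<in> {t..t0}" for s
        by (rule conv_fwd_bwd[where a=t and f="\<lambda>s. \<Phi> s t y"]) (use fwd tt that in auto)
      show "((\<lambda>\<tau>. B (\<Phi> \<tau> t0 z) \<tau>) has_integral (\<Phi> t0 t0 z - \<Phi> s t0 z)) {s..t0}"
        if "s \<in> {t..t0}" for s using bwd[of t0 s z] that tt by auto
    qed (use L0 tt in auto)
    then show ?thesis using id[of t y] id[of t0 z] tt by (simp add: z_def)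
  qed
  have near: "norm (\<Phi> t t0 x - x) \<le> \<bar>M\<bar> * T" if tt: "0 \<le> t" "t \<le> t0" "t0 \<le> T" for t t0 x
  proof -
    have "norm (\<Phi> t0 t0 x - \<Phi> t t0 x) \<le> \<bar>M\<bar> * Henstock_Kurzweil_Integration.content {t..t0}"
      using bwd[of t0 t x] tt
      by (intro has_integral_bound_real[where f="\<lambda>\<tau>. B (\<Phi> \<tau> t0 x) \<tau>" and S="{}"]) (auto intro: order_trans[OF M])
    also have "\<dots> \<le> \<bar>M\<bar> * T" using tt by (auto intro!: mult_left_mono)
    finally show ?thesis using id[of t0 x] tt by (simp add: norm_minus_commute)
  qed
  define S where "S = {y. norm y \<le> R \<and> cball y \<delta> \<subseteq> U}"
  define O0 where "O0 = (\<Union>y\<in>S. ball y (\<delta>/2))"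
  have op: "open O0" unfolding O0_def by auto
  have clsub: "closure O0 \<subseteq> U \<inter> cball 0 (R + \<delta>)"
  proof
    fix w assume "w \<in> closure O0"
    then obtain w' where w': "w' \<in> O0" "dist w' w < \<delta>/2"
      using closure_approachable \<delta>0 by (metis half_gt_zero)
    then obtain y where y: "y \<in> S" "dist y w' < \<delta>/2" unfolding O0_def by auto
    have d: "dist y w \<le> \<delta>" using y(2) w'(2) dist_triangle[of y w w'] by linarith
    then have "w \<in> U" using y(1) unfolding S_def by auto
    moreover have "norm w \<le> R + \<delta>"
      using y(1) d norm_triangle_ineq2[of w y] unfolding S_def by (auto simp: dist_norm norm_minus_commute)
    ultimately show "w \<in> U \<inter> cball 0 (R + \<delta>)" by auto
  qed
  have comp: "compact (closure O0)"
    using clsub by (meson bounded_cball bounded_subset closed_closure compact_eq_bounded_closed le_infE)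
  have fl: "flushing T T0 (r0/2) \<Phi> \<Omega> O0"
    unfolding flushing_def
  proof (intro ballI)
    fix x0 t0 assume x0: "x0 \<in> closure \<Omega>" and t0: "t0 \<in> {T0..T}"
    obtain t where t: "t \<in> {t0 - T0<..<t0}" and tU: "\<And>x. x \<in> cball x0 r0 \<Longrightarrow> \<Phi> t t0 x \<in> U"
      using assms(12) x0 t0 unfolding flushing_def by blast
    have tt: "0 \<le> t" "t \<le> t0" "t0 \<le> T" using t t0 by auto
    have "\<forall>x\<in>cball x0 (r0/2). \<Phi> t t0 x \<in> O0"
    proof
      fix x assume x: "x \<in> cball x0 (r0/2)"
      define p where "p = \<Phi> t t0 x"
      have "norm x \<le> Rb + r0/2"
        using Rb[OF x0] x norm_triangle_ineq2[of x x0] by (auto simp: dist_norm norm_minus_commute)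
      then have np: "norm p \<le> R"
        using near[OF tt, of x] norm_triangle_ineq2[of p x] assms(6) unfolding p_def R_def by linarith
      have "cball p \<delta> \<subseteq> U"
      proof
        fix y assume y: "y \<in> cball p \<delta>"
        define z where "z = \<Phi> t0 t y"
        have "norm (z - x) \<le> norm (y - p) * K" unfolding z_def p_def by (rule lipest[OF tt])
        also have "\<dots> \<le> \<delta> * K" using y K0 by (auto simp: dist_norm norm_minus_commute)
        finally have "norm (z - x) \<le> r0/2" using \<delta>K by simp
        then have "z \<in> cball x0 r0"
          using x dist_triangle[of x0 z x] by (auto simp: dist_norm norm_minus_commute)
        then have "\<Phi> t t0 z \<in> U" by (rule tU)
        then show "y \<in> U" using inv[OF tt] unfolding z_def by simp
      qed
      then have "p \<in> S" using np unfolding S_def by auto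
      then show "\<Phi> t t0 x \<in> O0" unfolding O0_def p_def using \<delta>0 by (intro UN_I[of p]) (auto simp: p_def)
    qed
    then show "\<exists>t\<in>{t0 - T0<..<t0}. \<forall>x\<in>cball x0 (r0 / 2). \<Phi> t t0 x \<in> O0" using t by blast
  qed
  show ?thesis using op comp clsub fl by blast
qed

end
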